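(* Fix $\alpha>0$, $\gamma>0$, $\Sigma_\epsilon>0$, $\omega_1\in[0,1)$, $\omega_2\in[0,1]$. Let $$T(x)=\left(\frac{\omega_2}{x^2}+\frac{(1-\omega_2)\alpha^2\gamma^2\Sigma_\epsilon}{(1+\gamma-x)^2}\right)^{-1/2},\qquad f_y(x)=\left(\frac{\omega_1}{x^2}+\frac{(1-\omega_1)\gamma^2\alpha^2\Sigma_\epsilon}{(1+\gamma-y)^2}\right)^{-1/2}.$$ Suppose $(\lambda_{2,t})_{t\ge0}$, with $\lambda_{2,t+1}=T(\lambda_{2,t})$ and $\lambda_{2,t}\in[1,1+\gamma)$ for all $t$, is periodic of minimal period $p$. Then the forced dynamics $\lambda_{1,t+1}=f_{\lambda_{2,t}}(\lambda_{1,t})$ is periodic of the same period: there is a sequence $(x_t)_{t\ge0}$ of minimal period $p$ with $x_{t+1}=f_{\lambda_{2,t}}(x_t)$, and for every $\lambda_{1,0}\in[1,\infty)$ one has $|\lambda_{1,t}-x_t|\to0$ as $t\to\infty$.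
   Context: This is the case $\pi_1=0$ of the two-bank leverage model, in which the large bank (leverage $\lambda_2$, memory $\omega_2$) forces the small bank (leverage $\lambda_1$, memory $\omega_1$). *)

theory Defs
  imports Complex_Main
begin

definition Tmap :: "real \<Rightarrow> real \<Rightarrow> real \<Rightarrow> real \<Rightarrow> real \<Rightarrow> real" where
  "Tmap \<alpha> \<gamma> \<Sigma> \<omega>2 x =
     (\<omega>2 / x\<^sup>2 + (1 - \<omega>2) * \<alpha>\<^sup>2 * \<gamma>\<^sup>2 * \<Sigma> / (1 + \<gamma> - x)\<^sup>2) powr (-1/2)"

definition fmap :: "real \<Rightarrow> real \<Rightarrow> real \<Rightarrow> real \<Rightarrow> real \<Rightarrow> real \<Rightarrow> real" where
  "fmap \<alpha> \<gamma> \<Sigma> \<omega>1 y x =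
     (\<omega>1 / x\<^sup>2 + (1 - \<omega>1) * \<gamma>\<^sup>2 * \<alpha>\<^sup>2 * \<Sigma> / (1 + \<gamma> - y)\<^sup>2) powr (-1/2)"

definition minimal_period :: "(nat \<Rightarrow> 'a) \<Rightarrow> nat \<Rightarrow> bool" where
  "minimal_period s p \<longleftrightarrow> p > 0 \<and> (\<forall>t. s (t + p) = s t) \<and>
     (\<forall>q. 0 < q \<and> q < p \<longrightarrow> \<not> (\<forall>t. s (t + q) = s t))"

primrec forced_orbit :: "(real \<Rightarrow> real \<Rightarrow> real) \<Rightarrow> (nat \<Rightarrow> real) \<Rightarrow> real \<Rightarrow> nat \<Rightarrow> real" where
  "forced_orbit f lam2 l0 0 = l0"
| "forced_orbit f lam2 l0 (Suc t) = f (lam2 t) (forced_orbit f lam2 l0 t)"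

end

theory Submission
  imports Defs
begin

lemma g_eq: "(z::real) > 0 \<Longrightarrow> z powr (-1/2) = 1 / sqrt z"
proof -
  assume z: "z > 0"
  have "z powr (-1/2) = z powr (- (1/2))" by simp
  also have "\<dots> = 1 / z powr (1/2)" by (rule powr_minus_divide)
  also have "\<dots> = 1 / sqrt z" using z by (simp add: powr_half_sqrt)
  finally show ?thesis .
qed

lemma inv_sq: "(z::real) > 0 \<Longrightarrow> 1 / (1 / sqrt z)\<^sup>2 = z" by (simp add: power_divide)

lemma affine_diff:
  fixes W V c :: "nat \<Rightarrow> real" and w :: real
  assumes "\<And>t. W (Suc t) = w * W t + c t" "\<And>t. V (Suc t) = w * V t + c t"
  shows "W t - V t = w ^ t * (W 0 - V 0)"
proof (induction t)
  case 0 show ?case by simp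
next
  case (Suc t)
  have "W (Suc t) - V (Suc t) = w * (W t - V t)" by (simp add: assms algebra_simps)
  then show ?case using Suc.IH by simp
qed

lemma bnd: fixes U V m :: real assumes "m > 0" "U \<ge> m" "V \<ge> m"
  shows "\<bar>1/sqrt U - 1/sqrt V\<bar> \<le> \<bar>U - V\<bar> / (m * sqrt m)"
proof -
  have sU: "sqrt U \<ge> sqrt m" "sqrt V \<ge> sqrt m" using assms by auto
  have pm: "sqrt m > 0" using assms by auto
  have pU: "sqrt U > 0" "sqrt V > 0" using sU pm by linarith+
  have e1: "1/sqrt U - 1/sqrt V = (sqrt V - sqrt U) / (sqrt U * sqrt V)"
    using pU by (simp add: field_simps)
  have e2: "(sqrt V - sqrt U) * (sqrt U + sqrt V) = V - U"
    using assms pm by (simp add: algebra_simps)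
  have e3: "sqrt V - sqrt U = (V - U) / (sqrt U + sqrt V)"
  proof -
    have "sqrt U + sqrt V > 0" using pU by linarith
    thus ?thesis using e2 by (simp add: eq_divide_eq)
  qed
  have e: "1/sqrt U - 1/sqrt V = (V - U) / (sqrt U * sqrt V * (sqrt U + sqrt V))"
    using e1 e3 by simp
  have d: "m * sqrt m \<le> sqrt U * sqrt V * (sqrt U + sqrt V)"
  proof -
    have mm: "m = sqrt m * sqrt m" using assms by simp
    have "sqrt m * sqrt m \<le> sqrt U * sqrt V" using sU pm by (intro mult_mono) auto
    hence "m \<le> sqrt U * sqrt V" using mm by simp
    moreover have "sqrt m \<le> sqrt U + sqrt V" using sU pm by linarith
    ultimately show ?thesis using pm assms by (intro mult_mono) auto
  qed
  have "\<bar>1/sqrt U - 1/sqrt V\<bar> = \<bar>U - V\<bar> / (sqrt U * sqrt V * (sqrt U + sqrt V))"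
    using e pU by (simp add: abs_minus_commute)
  also have "\<dots> \<le> \<bar>U - V\<bar> / (m * sqrt m)"
    using d pm pU assms by (intro divide_left_mono) (auto intro!: mult_pos_pos add_pos_pos)
  finally show ?thesis .
qed

theorem mainTheorem4:
  fixes \<alpha> \<gamma> \<Sigma> \<omega>1 \<omega>2 :: real and lam2 :: "nat \<Rightarrow> real" and p :: nat
  assumes "\<alpha> > 0" and "\<gamma> > 0" and "\<Sigma> > 0"
    and "0 \<le> \<omega>1" and "\<omega>1 < 1" and "0 \<le> \<omega>2" and "\<omega>2 \<le> 1"
    and "\<forall>t. lam2 (Suc t) = Tmap \<alpha> \<gamma> \<Sigma> \<omega>2 (lam2 t)"
    and "\<forall>t. 1 \<le> lam2 t \<and> lam2 t < 1 + \<gamma>"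
    and "minimal_period lam2 p"
  shows "\<exists>x :: nat \<Rightarrow> real. minimal_period x p
           \<and> (\<forall>t. x (Suc t) = fmap \<alpha> \<gamma> \<Sigma> \<omega>1 (lam2 t) (x t))
           \<and> (\<forall>l0 \<ge> 1. (\<lambda>t. \<bar>forced_orbit (fmap \<alpha> \<gamma> \<Sigma> \<omega>1) lam2 l0 t - x t\<bar>)
                          \<longlonglongrightarrow> 0)"
proof -
  define K where "K = (1 - \<omega>1) * \<gamma>\<^sup>2 * \<alpha>\<^sup>2 * \<Sigma>"
  define c where "c t = K / (1 + \<gamma> - lam2 t)\<^sup>2" for t
  define m where "m = K / \<gamma>\<^sup>2"
  have Kpos: "K > 0" unfolding K_def using assms by simp
  have mpos: "m > 0" unfolding m_def using Kpos assms by simp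
  have dpos: "1 + \<gamma> - lam2 t > 0" for t using assms(9) by auto
  have cpos: "c t > 0" for t unfolding c_def using Kpos dpos[of t] by simp
  have cm: "c t \<ge> m" for t
  proof -
    have "1 + \<gamma> - lam2 t \<le> \<gamma>" using assms(9) by auto
    hence "(1 + \<gamma> - lam2 t)\<^sup>2 \<le> \<gamma>\<^sup>2" using dpos[of t] by (intro power_mono) auto
    thus ?thesis unfolding c_def m_def using Kpos dpos[of t]
      by (intro divide_left_mono) (auto intro!: mult_pos_pos)
  qed
  have fm: "fmap \<alpha> \<gamma> \<Sigma> \<omega>1 (lam2 t) z = 1 / sqrt (\<omega>1 * (1 / z\<^sup>2) + c t)" for t z
  proof -
    have "\<omega>1 * (1 / z\<^sup>2) + c t > 0" using cpos[of t] assms(4) by (simp add: add_nonneg_pos)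
    thus ?thesis unfolding fmap_def c_def K_def using g_eq by simp
  qed
  have pp: "p > 0" and lper: "\<forall>t. lam2 (t + p) = lam2 t"
    and lmin: "\<forall>q. 0 < q \<and> q < p \<longrightarrow> \<not> (\<forall>t. lam2 (t + q) = lam2 t)"
    using assms(10) unfolding minimal_period_def by auto
  have cper: "c (t + p) = c t" for t unfolding c_def using lper by simp
  define S where "S = rec_nat 0 (\<lambda>t s. \<omega>1 * s + c t)"
  have S0: "S 0 = 0" and SS: "S (Suc t) = \<omega>1 * S t + c t" for t unfolding S_def by simp_all
  have Snn: "S t \<ge> 0" for t
    by (induction t) (auto simp: S0 SS intro!: add_nonneg_nonneg mult_nonneg_nonneg assms(4) less_imp_le[OF cpos])
  have Spos: "S p > 0"
  proof -
    obtain q where "p = Suc q" using pp by (cases p) auto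
    thus ?thesis using SS[of q] Snn[of q] cpos[of q] assms(4) by (simp add: add_nonneg_pos)
  qed
  have wp: "\<omega>1 ^ p < 1" using assms(4,5) pp by (simp add: power_less_one_iff)
  define v0 where "v0 = S p / (1 - \<omega>1 ^ p)"
  define V where "V = rec_nat v0 (\<lambda>t v. \<omega>1 * v + c t)"
  have V0: "V 0 = v0" and VS: "V (Suc t) = \<omega>1 * V t + c t" for t unfolding V_def by simp_all
  have v0pos: "v0 > 0" unfolding v0_def using Spos wp by simp
  have Vclosed: "V t = \<omega>1 ^ t * v0 + S t" for t
    by (induction t) (simp_all add: V0 S0 VS SS algebra_simps)
  have Vp: "V p = V 0"
  proof -
    have "V p = \<omega>1 ^ p * v0 + (1 - \<omega>1 ^ p) * v0" using wp by (simp add: Vclosed v0_def)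
    thus ?thesis by (simp add: V0 algebra_simps)
  qed
  have Vper: "V (t + p) = V t" for t
  proof -
    have "V (t + p) - V t = \<omega>1 ^ t * (V (0 + p) - V 0)"
      by (rule affine_diff[where W="\<lambda>t. V (t + p)" and c=c]) (simp_all add: VS cper)
    thus ?thesis using Vp by simp
  qed
  have Vnn: "V t \<ge> 0" for t using Vclosed[of t] Snn[of t] v0pos assms(4) by simp
  have VmS: "V (Suc q) \<ge> m" for q
    using VS[of q] cm[of q] mult_nonneg_nonneg[OF assms(4) Vnn[of q]] by linarith
  have Vm: "V t \<ge> m" for t
  proof (cases t)
    case 0
    obtain q where "p = Suc q" using pp by (cases p) auto
    then show ?thesis using 0 Vp VmS[of q] by simp
  next
    case (Suc q)
    then show ?thesis using VmS by simp
  qed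
  have Vpos: "V t > 0" for t using Vm[of t] mpos by linarith
  define x where "x t = 1 / sqrt (V t)" for t
  have Vx: "1 / (x t)\<^sup>2 = V t" for t unfolding x_def using inv_sq Vpos by simp
  have xrec: "\<forall>t. x (Suc t) = fmap \<alpha> \<gamma> \<Sigma> \<omega>1 (lam2 t) (x t)"
  proof
    fix t
    have "fmap \<alpha> \<gamma> \<Sigma> \<omega>1 (lam2 t) (x t) = 1 / sqrt (\<omega>1 * (1 / (x t)\<^sup>2) + c t)" by (rule fm)
    also have "\<dots> = 1 / sqrt (\<omega>1 * V t + c t)" by (simp only: Vx)
    also have "\<dots> = x (Suc t)" by (simp add: x_def VS)
    finally show "x (Suc t) = fmap \<alpha> \<gamma> \<Sigma> \<omega>1 (lam2 t) (x t)" ..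
  qed
  have xmin: "minimal_period x p"
    unfolding minimal_period_def
  proof (intro conjI allI impI)
    show "0 < p" by fact
    fix t show "x (t + p) = x t" unfolding x_def using Vper by simp
  next
    fix q assume q: "0 < q \<and> q < p"
    show "\<not> (\<forall>t. x (t + q) = x t)"
    proof
      assume xq: "\<forall>t. x (t + q) = x t"
      have Vq: "V (t + q) = V t" for t using Vx xq by metis
      have "lam2 (t + q) = lam2 t" for t
      proof -
        have "c (t + q) = c t" using VS[of "t + q"] VS[of t] Vq[of t] Vq[of "Suc t"] by simp
        hence "(1 + \<gamma> - lam2 (t + q))\<^sup>2 = (1 + \<gamma> - lam2 t)\<^sup>2"
          unfolding c_def using Kpos dpos[of t] dpos[of "t+q"] by (simp add: divide_simps)
        hence "1 + \<gamma> - lam2 (t + q) = 1 + \<gamma> - lam2 t"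
          using dpos[of t] dpos[of "t+q"] by (simp add: power2_eq_iff_nonneg)
        thus ?thesis by simp
      qed
      thus False using lmin q by blast
    qed
  qed
  have conv: "(\<lambda>t. \<bar>forced_orbit (fmap \<alpha> \<gamma> \<Sigma> \<omega>1) lam2 l0 t - x t\<bar>) \<longlonglongrightarrow> 0"
    if l0: "l0 \<ge> 1" for l0
  proof -
    define Ob where "Ob = forced_orbit (fmap \<alpha> \<gamma> \<Sigma> \<omega>1) lam2 l0"
    define U where "U t = 1 / (Ob t)\<^sup>2" for t
    have Opos: "Ob t > 0" for t
    proof (cases t)
      case 0 thus ?thesis using l0 by (simp add: Ob_def)
    next
      case (Suc q)
      have "\<omega>1 * (1 / (Ob q)\<^sup>2) + c q > 0" using cpos[of q] assms(4) by (simp add: add_nonneg_pos)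
      thus ?thesis using Suc fm by (simp add: Ob_def)
    qed
    have US: "U (Suc t) = \<omega>1 * U t + c t" for t
    proof -
      have "\<omega>1 * (1 / (Ob t)\<^sup>2) + c t > 0" using cpos[of t] assms(4) by (simp add: add_nonneg_pos)
      thus ?thesis unfolding U_def Ob_def using fm inv_sq by simp
    qed
    have Ueq: "Ob t = 1 / sqrt (U t)" for t
      unfolding U_def using Opos[of t] by (simp add: real_sqrt_divide)
    have Um: "U (Suc t) \<ge> m" for t
    proof -
      have "U t \<ge> 0" unfolding U_def by simp
      thus ?thesis using US[of t] cm[of t] mult_nonneg_nonneg[OF assms(4), of "U t"] by linarith
    qed
    have diff: "U t - V t = \<omega>1 ^ t * (U 0 - V 0)" for t
      by (rule affine_diff) (simp_all add: US VS)
    have lim0: "(\<lambda>t. \<omega>1 ^ t * (U 0 - V 0)) \<longlonglongrightarrow> 0"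
      using assms(4,5) by (intro tendsto_mult_left_zero LIMSEQ_power_zero) auto
    have lim1: "(\<lambda>t. \<bar>\<omega>1 ^ t * (U 0 - V 0)\<bar> / (m * sqrt m)) \<longlonglongrightarrow> 0"
      using tendsto_divide_zero[OF tendsto_rabs_zero[OF lim0]] by simp
    show ?thesis unfolding Ob_def[symmetric]
    proof (rule tendsto_sandwich[OF _ _ tendsto_const lim1])
      show "\<forall>\<^sub>F t in sequentially. (0::real) \<le> \<bar>Ob t - x t\<bar>" by simp
      show "\<forall>\<^sub>F t in sequentially. \<bar>Ob t - x t\<bar> \<le> \<bar>\<omega>1 ^ t * (U 0 - V 0)\<bar> / (m * sqrt m)"
        unfolding eventually_sequentially
      proof (intro exI allI impI)
        fix t :: nat assume "1 \<le> t"
        then obtain q where t: "t = Suc q" by (cases t) auto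
        have "\<bar>Ob t - x t\<bar> \<le> \<bar>U t - V t\<bar> / (m * sqrt m)"
          unfolding Ueq x_def using bnd[OF mpos Um[of q] Vm[of t]] t by simp
        thus "\<bar>Ob t - x t\<bar> \<le> \<bar>\<omega>1 ^ t * (U 0 - V 0)\<bar> / (m * sqrt m)" using diff[of t] by simp
      qed
    qed
  qed
  show ?thesis using xmin xrec conv by blast
qed

end
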